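(* With $p_n=\Psi(P_n)$, $m_n=\Psi(M_n)$, $o_n=\Psi(O_n)$ for $n\ge1$ and $p_0=m_0=o_0=1$, the following hold for all $n\ge 3$: (i) $p_n=5p_{n-1}-4p_{n-2}+4p_{n-3}$, with $p_0=1$, $p_1=5$, $p_2=25$; (ii) $m_n=6m_{n-1}-3m_{n-2}+2m_{n-3}$, with $m_0=1$, $m_1=5$, $m_2=25$; (iii) $o_n=4o_{n-1}+4o_{n-2}+o_{n-3}$, with $o_0=1$, $o_1=5$, $o_2=25$.
   Context: A matching of a graph is a set of pairwise vertex-disjoint edges; it is maximal if it is not a proper subset of another matching. $\Psi(G)$ is the number of maximal matchings of $G$. A chain hexagonal cactus is a connected graph all of whose blocks are 6-cycles (hexagons), in which each hexagon has at most two cut-vertices and each cut-vertex lies in exactly two hexagons; its length is its number of hexagons. An internal hexagon (one with two cut-vertices) is ortho, meta or para if its two cut-vertices are at distance 1, 2 or 3 in the hexagon. $P_n$, $M_n$, $O_n$ are the chain hexagonal cacti of length $n$ whose internal hexagons are all para, all meta, resp. all ortho. *)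

theory Defs
  imports Main
begin

text \<open>Simple graphs given by an edge set; each edge is a 2-element vertex set.\<close>

definition is_matching :: "'a set set \<Rightarrow> 'a set set \<Rightarrow> bool" where
  "is_matching E M \<longleftrightarrow> M \<subseteq> E \<and> (\<forall>e\<in>M. \<forall>f\<in>M. e \<noteq> f \<longrightarrow> e \<inter> f = {})"

definition is_maximal_matching :: "'a set set \<Rightarrow> 'a set set \<Rightarrow> bool" where
  "is_maximal_matching E M \<longleftrightarrow> is_matching E M \<and>
     (\<forall>M'. is_matching E M' \<and> M \<subseteq> M' \<longrightarrow> M' = M)"

definition num_max_matchings :: "'a set set \<Rightarrow> nat" where
  "num_max_matchings E = card {M. is_maximal_matching E M}"

text \<open>Chain hexagonal cactus of length n in which every internal hexagon has its two
  cut-vertices at cyclic distance d (d = 3 para, d = 2 meta, d = 1 ortho).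
  Hexagon i (i < n) has vertices at positions j = 0..5 around the cycle; vertex at
  position 0 of hexagon i+1 is identified with position d of hexagon i.\<close>
definition hex_vert :: "nat \<Rightarrow> nat \<Rightarrow> nat \<Rightarrow> nat \<times> nat" where
  "hex_vert d i j = (if j = 0 \<and> 0 < i then (i - 1, d) else (i, j))"

definition chain_cactus :: "nat \<Rightarrow> nat \<Rightarrow> (nat \<times> nat) set set" where
  "chain_cactus d n = {{hex_vert d i j, hex_vert d i ((j + 1) mod 6)} | i j. i < n \<and> j < 6}"

abbreviation para_chain :: "nat \<Rightarrow> (nat \<times> nat) set set" where
  "para_chain n \<equiv> chain_cactus 3 n"
abbreviation meta_chain :: "nat \<Rightarrow> (nat \<times> nat) set set" where
  "meta_chain n \<equiv> chain_cactus 2 n"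
abbreviation ortho_chain :: "nat \<Rightarrow> (nat \<times> nat) set set" where
  "ortho_chain n \<equiv> chain_cactus 1 n"

definition pseq :: "nat \<Rightarrow> int" where
  "pseq n = (if n = 0 then 1 else int (num_max_matchings (para_chain n)))"
definition mseq :: "nat \<Rightarrow> int" where
  "mseq n = (if n = 0 then 1 else int (num_max_matchings (meta_chain n)))"
definition oseq :: "nat \<Rightarrow> int" where
  "oseq n = (if n = 0 then 1 else int (num_max_matchings (ortho_chain n)))"

end

theory Submission
  imports Defs
begin


definition edg :: "nat \<Rightarrow> nat \<Rightarrow> nat \<Rightarrow> (nat \<times> nat) set" where
  "edg d i j = {hex_vert d i j, hex_vert d i ((j+1) mod 6)}"

lemma chain_eq: "chain_cactus d n = {edg d i j | i j. i < n \<and> j < 6}"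
  by (simp add: chain_cactus_def edg_def)

lemma hv_eq:
  assumes "1 \<le> d" "d < 6" "p < 6" "p' < 6"
  shows "(hex_vert d i p = hex_vert d i' p') \<longleftrightarrow>
    (i = i' \<and> p = p') \<or> (i' = Suc i \<and> p' = 0 \<and> p = d) \<or> (i = Suc i' \<and> p = 0 \<and> p' = d)"
  using assms by (auto simp: hex_vert_def split: if_splits)

definition shr :: "nat \<Rightarrow> nat \<Rightarrow> nat \<Rightarrow> nat \<Rightarrow> nat \<Rightarrow> bool" where
  "shr d i j i' j' \<longleftrightarrow> (i = i' \<and> (j' = j \<or> j' = (j+1) mod 6 \<or> j = (j'+1) mod 6))
     \<or> (i' = Suc i \<and> (j = d - 1 \<or> j = d) \<and> (j' = 5 \<or> j' = 0))
     \<or> (i = Suc i' \<and> (j' = d - 1 \<or> j' = d) \<and> (j = 5 \<or> j = 0))"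

lemma six_set: "(j::nat) < 6 \<Longrightarrow> j \<in> {0,1,2,3,4,5}"
  by auto

lemma shr_brute: "\<forall>d\<in>{1,2,3::nat}. \<forall>j\<in>{0,1,2,3,4,5::nat}. \<forall>j'\<in>{0,1,2,3,4,5::nat}.
   (\<exists>p\<in>{j, (j+1) mod 6}. \<exists>p'\<in>{j', (j'+1) mod 6}.
    (i = i' \<and> p = p') \<or> (i' = Suc i \<and> p' = 0 \<and> p = d) \<or> (i = Suc i' \<and> p = 0 \<and> p' = d)) \<longleftrightarrow> shr d i j i' j'"
  apply (simp add: shr_def) apply blast done

lemma inj_brute: "\<forall>d\<in>{1,2,3::nat}. \<forall>j\<in>{0,1,2,3,4,5::nat}. \<forall>j'\<in>{0,1,2,3,4,5::nat}.
   (let E = (\<lambda>p p'. (i = i' \<and> p = p') \<or> (i' = Suc i \<and> p' = 0 \<and> p = d) \<or> (i = Suc i' \<and> p = 0 \<and> p' = d))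
    in (E j j' \<and> E ((j+1) mod 6) ((j'+1) mod 6)) \<or> (E j ((j'+1) mod 6) \<and> E ((j+1) mod 6) j'))
   \<longleftrightarrow> i = i' \<and> j = j'"
  apply (simp add: Let_def) apply arith done

lemma edg_int:
  assumes d: "d \<in> {1,2,3}" and j: "j < 6" and j': "j' < 6"
  shows "(edg d i j \<inter> edg d i' j' \<noteq> {}) \<longleftrightarrow> shr d i j i' j'"
proof -
  have d1: "1 \<le> d" "d < 6" using d by auto
  have "(edg d i j \<inter> edg d i' j' \<noteq> {}) \<longleftrightarrow>
    (\<exists>p\<in>{j, (j+1) mod 6}. \<exists>p'\<in>{j', (j'+1) mod 6}. hex_vert d i p = hex_vert d i' p')"
    by (auto simp: edg_def)
  also have "\<dots> \<longleftrightarrow> (\<exists>p\<in>{j, (j+1) mod 6}. \<exists>p'\<in>{j', (j'+1) mod 6}.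
    (i = i' \<and> p = p') \<or> (i' = Suc i \<and> p' = 0 \<and> p = d) \<or> (i = Suc i' \<and> p = 0 \<and> p' = d))"
    using d1 j j' by (simp add: hv_eq)
  also have "\<dots> \<longleftrightarrow> shr d i j i' j'"
    by (rule shr_brute[rule_format, OF d six_set[OF j] six_set[OF j']])
  finally show ?thesis .
qed

lemma edg_inj:
  assumes d: "d \<in> {1,2,3}" and j: "j < 6" and j': "j' < 6"
  shows "edg d i j = edg d i' j' \<longleftrightarrow> i = i' \<and> j = j'"
proof -
  have d1: "1 \<le> d" "d < 6" using d by auto
  have "edg d i j = edg d i' j' \<longleftrightarrow>
    (hex_vert d i j = hex_vert d i' j' \<and> hex_vert d i ((j+1) mod 6) = hex_vert d i' ((j'+1) mod 6)) \<or>
    (hex_vert d i j = hex_vert d i' ((j'+1) mod 6) \<and> hex_vert d i ((j+1) mod 6) = hex_vert d i' j')"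
    unfolding edg_def by (rule doubleton_eq_iff)
  also have "\<dots> \<longleftrightarrow> (let E = (\<lambda>p p'. (i = i' \<and> p = p') \<or> (i' = Suc i \<and> p' = 0 \<and> p = d) \<or> (i = Suc i' \<and> p = 0 \<and> p' = d))
    in (E j j' \<and> E ((j+1) mod 6) ((j'+1) mod 6)) \<or> (E j ((j'+1) mod 6) \<and> E ((j+1) mod 6) j'))"
    using d1 j j' by (simp add: hv_eq Let_def)
  also have "\<dots> \<longleftrightarrow> i = i' \<and> j = j'"
    by (rule inj_brute[rule_format, OF d six_set[OF j] six_set[OF j']])
  finally show ?thesis .
qed




definition Mof :: "nat \<Rightarrow> bool list list \<Rightarrow> (nat\<times>nat) set set" where
  "Mof d ws = {edg d i j | i j. i < length ws \<and> j < 6 \<and> ws!i!j}"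

definition wfl :: "nat \<Rightarrow> bool list list \<Rightarrow> bool" where
  "wfl n ws \<longleftrightarrow> length ws = n \<and> (\<forall>w\<in>set ws. length w = 6)"

definition G :: "nat \<Rightarrow> bool list list \<Rightarrow> bool" where
  "G d ws \<longleftrightarrow> (\<forall>i<length ws. \<forall>j<6. \<forall>i'<length ws. \<forall>j'<6.
        ws!i!j \<and> ws!i'!j' \<and> (i,j) \<noteq> (i',j') \<longrightarrow> \<not> shr d i j i' j')
   \<and> (\<forall>i<length ws. \<forall>j<6. \<not> ws!i!j \<longrightarrow> (\<exists>i'<length ws. \<exists>j'<6. ws!i'!j' \<and> shr d i j i' j'))"

lemma maxm_iff:
  "is_maximal_matching E M \<longleftrightarrow> is_matching E M \<and> (\<forall>e\<in>E. e \<notin> M \<longrightarrow> (\<exists>f\<in>M. e \<inter> f \<noteq> {}))"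
proof
  assume h: "is_maximal_matching E M"
  hence m: "is_matching E M" by (simp add: is_maximal_matching_def)
  show "is_matching E M \<and> (\<forall>e\<in>E. e \<notin> M \<longrightarrow> (\<exists>f\<in>M. e \<inter> f \<noteq> {}))"
  proof (intro conjI m ballI impI)
    fix e assume e: "e \<in> E" "e \<notin> M"
    show "\<exists>f\<in>M. e \<inter> f \<noteq> {}"
    proof (rule ccontr)
      assume "\<not> (\<exists>f\<in>M. e \<inter> f \<noteq> {})"
      hence "is_matching E (insert e M)" using m e unfolding is_matching_def by blast
      hence "insert e M = M" using h unfolding is_maximal_matching_def by blast
      thus False using e by blast
    qed
  qed
next
  assume h: "is_matching E M \<and> (\<forall>e\<in>E. e \<notin> M \<longrightarrow> (\<exists>f\<in>M. e \<inter> f \<noteq> {}))"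
  show "is_maximal_matching E M"
    unfolding is_maximal_matching_def
  proof (intro conjI allI impI)
    show "is_matching E M" using h by simp
    fix M' assume M': "is_matching E M' \<and> M \<subseteq> M'"
    show "M' = M"
    proof (rule ccontr)
      assume "M' \<noteq> M"
      then obtain e where e: "e \<in> M'" "e \<notin> M" using M' by blast
      hence "e \<in> E" using M' unfolding is_matching_def by blast
      then obtain f where f: "f \<in> M" "e \<inter> f \<noteq> {}" using h e by blast
      have "e \<noteq> f" using e f by blast
      thus False using M' e f unfolding is_matching_def by blast
    qed
  qed
qed

lemma mem_Mof:
  assumes d: "d \<in> {1,2,3}" and i: "i < length ws" and j: "j < 6"
  shows "edg d i j \<in> Mof d ws \<longleftrightarrow> ws!i!j"
proof
  assume "edg d i j \<in> Mof d ws"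
  then obtain i' j' where h: "edg d i j = edg d i' j'" "i' < length ws" "j' < 6" "ws!i'!j'"
    unfolding Mof_def by blast
  hence "i = i' \<and> j = j'" using edg_inj[OF d j h(3)] by simp
  thus "ws!i!j" using h by simp
next
  assume "ws!i!j" thus "edg d i j \<in> Mof d ws" using i j unfolding Mof_def by blast
qed

lemma Mof_sub: "Mof d ws \<subseteq> chain_cactus d (length ws)"
  unfolding Mof_def chain_eq by blast

lemma max_iff_G:
  assumes d: "d \<in> {1,2,3}"
  shows "is_maximal_matching (chain_cactus d (length ws)) (Mof d ws) \<longleftrightarrow> G d ws"
proof -
  let ?n = "length ws"
  have A: "(\<forall>e\<in>Mof d ws. \<forall>f\<in>Mof d ws. e \<noteq> f \<longrightarrow> e \<inter> f = {}) \<longleftrightarrow>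
    (\<forall>i<?n. \<forall>j<6. \<forall>i'<?n. \<forall>j'<6.
        ws!i!j \<and> ws!i'!j' \<and> (i,j) \<noteq> (i',j') \<longrightarrow> \<not> shr d i j i' j')"
    (is "?X \<longleftrightarrow> ?X'")
  proof
    assume h: "\<forall>e\<in>Mof d ws. \<forall>f\<in>Mof d ws. e \<noteq> f \<longrightarrow> e \<inter> f = {}"
    show "\<forall>i<?n. \<forall>j<6. \<forall>i'<?n. \<forall>j'<6.
        ws!i!j \<and> ws!i'!j' \<and> (i,j) \<noteq> (i',j') \<longrightarrow> \<not> shr d i j i' j'"
    proof (intro allI impI)
      fix i j i' j' assume a: "i < ?n" "j < 6" "i' < ?n" "j' < 6"
        "ws!i!j \<and> ws!i'!j' \<and> (i,j) \<noteq> (i',j')"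
      have "edg d i j \<in> Mof d ws" "edg d i' j' \<in> Mof d ws" using a mem_Mof[OF d] by auto
      moreover have "edg d i j \<noteq> edg d i' j'" using a edg_inj[OF d] by auto
      ultimately have "edg d i j \<inter> edg d i' j' = {}" using h by blast
      thus "\<not> shr d i j i' j'" using edg_int[OF d a(2) a(4), where i=i and i'=i'] by simp
    qed
  next
    assume h: "\<forall>i<?n. \<forall>j<6. \<forall>i'<?n. \<forall>j'<6.
        ws!i!j \<and> ws!i'!j' \<and> (i,j) \<noteq> (i',j') \<longrightarrow> \<not> shr d i j i' j'"
    show "\<forall>e\<in>Mof d ws. \<forall>f\<in>Mof d ws. e \<noteq> f \<longrightarrow> e \<inter> f = {}"
    proof (intro ballI impI)
      fix e f assume e: "e \<in> Mof d ws" and f: "f \<in> Mof d ws" and ef: "e \<noteq> f"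
      obtain i j where ij: "e = edg d i j" "i < ?n" "j < 6" "ws!i!j" using e unfolding Mof_def by blast
      obtain i' j' where ij': "f = edg d i' j'" "i' < ?n" "j' < 6" "ws!i'!j'" using f unfolding Mof_def by blast
      have "(i,j) \<noteq> (i',j')" using ef ij ij' by auto
      hence "\<not> shr d i j i' j'" using h ij ij' by blast
      thus "e \<inter> f = {}" using edg_int[OF d ij(3) ij'(3), where i=i and i'=i'] ij ij' by simp
    qed
  qed
  have B: "(\<forall>e\<in>chain_cactus d ?n. e \<notin> Mof d ws \<longrightarrow> (\<exists>f\<in>Mof d ws. e \<inter> f \<noteq> {})) \<longleftrightarrow>
     (\<forall>i<?n. \<forall>j<6. \<not> ws!i!j \<longrightarrow> (\<exists>i'<?n. \<exists>j'<6. ws!i'!j' \<and> shr d i j i' j'))"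
    (is "?Y \<longleftrightarrow> ?Y'")
  proof
    assume h: "\<forall>e\<in>chain_cactus d ?n. e \<notin> Mof d ws \<longrightarrow> (\<exists>f\<in>Mof d ws. e \<inter> f \<noteq> {})"
    show "\<forall>i<?n. \<forall>j<6. \<not> ws!i!j \<longrightarrow> (\<exists>i'<?n. \<exists>j'<6. ws!i'!j' \<and> shr d i j i' j')"
    proof (intro allI impI)
      fix i j assume a: "i < ?n" "j < 6" "\<not> ws!i!j"
      have "edg d i j \<in> chain_cactus d ?n" using a unfolding chain_eq by blast
      moreover have "edg d i j \<notin> Mof d ws" using a mem_Mof[OF d] by auto
      ultimately obtain f where f: "f \<in> Mof d ws" "edg d i j \<inter> f \<noteq> {}" using h by blast
      obtain i' j' where ij': "f = edg d i' j'" "i' < ?n" "j' < 6" "ws!i'!j'" using f unfolding Mof_def by blast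
      have "shr d i j i' j'" using edg_int[OF d a(2) ij'(3), where i=i and i'=i'] f ij' by simp
      thus "\<exists>i'<?n. \<exists>j'<6. ws!i'!j' \<and> shr d i j i' j'" using ij' by blast
    qed
  next
    assume h: "\<forall>i<?n. \<forall>j<6. \<not> ws!i!j \<longrightarrow> (\<exists>i'<?n. \<exists>j'<6. ws!i'!j' \<and> shr d i j i' j')"
    show "\<forall>e\<in>chain_cactus d ?n. e \<notin> Mof d ws \<longrightarrow> (\<exists>f\<in>Mof d ws. e \<inter> f \<noteq> {})"
    proof (intro ballI impI)
      fix e assume e: "e \<in> chain_cactus d ?n" "e \<notin> Mof d ws"
      obtain i j where ij: "e = edg d i j" "i < ?n" "j < 6" using e(1) unfolding chain_eq by blast
      have "\<not> ws!i!j" using e ij mem_Mof[OF d] by auto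
      then obtain i' j' where ij': "i' < ?n" "j' < 6" "ws!i'!j'" "shr d i j i' j'" using h ij by blast
      have "edg d i' j' \<in> Mof d ws" using ij' mem_Mof[OF d] by auto
      moreover have "e \<inter> edg d i' j' \<noteq> {}" using edg_int[OF d ij(3) ij'(2), where i=i and i'=i'] ij ij' by simp
      ultimately show "\<exists>f\<in>Mof d ws. e \<inter> f \<noteq> {}" by blast
    qed
  qed
  have "is_maximal_matching (chain_cactus d ?n) (Mof d ws) \<longleftrightarrow> (Mof d ws \<subseteq> chain_cactus d ?n \<and> ?X) \<and> ?Y"
    by (simp only: maxm_iff is_matching_def)
  also have "\<dots> \<longleftrightarrow> ?X' \<and> ?Y'" by (simp only: Mof_sub A B simp_thms)
  also have "\<dots> \<longleftrightarrow> G d ws" unfolding G_def by (rule refl)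
  finally show ?thesis .
qed

definition wof :: "nat \<Rightarrow> nat \<Rightarrow> (nat\<times>nat) set set \<Rightarrow> bool list list" where
  "wof d n M = map (\<lambda>i. map (\<lambda>j. edg d i j \<in> M) [0..<6]) [0..<n]"

lemma wof_wfl: "wfl n (wof d n M)"
  unfolding wfl_def wof_def by auto

lemma Mof_wof:
  assumes d: "d \<in> {1,2,3}" and M: "M \<subseteq> chain_cactus d n"
  shows "Mof d (wof d n M) = M"
proof
  show "Mof d (wof d n M) \<subseteq> M"
    unfolding Mof_def wof_def by auto
  show "M \<subseteq> Mof d (wof d n M)"
  proof
    fix e assume e: "e \<in> M"
    then obtain i j where ij: "e = edg d i j" "i < n" "j < 6" using M unfolding chain_eq by blast
    show "e \<in> Mof d (wof d n M)" unfolding Mof_def wof_def using ij e by force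
  qed
qed

lemma inj_Mof:
  assumes d: "d \<in> {1,2,3}"
  shows "inj_on (Mof d) {ws. wfl n ws}"
proof (rule inj_onI)
  fix ws vs assume ws: "ws \<in> {ws. wfl n ws}" and vs: "vs \<in> {ws. wfl n ws}" and eq: "Mof d ws = Mof d vs"
  show "ws = vs"
  proof (rule nth_equalityI)
    show "length ws = length vs" using ws vs by (simp add: wfl_def)
    fix i assume i: "i < length ws"
    have li: "i < length vs" using i ws vs by (simp add: wfl_def)
    have l6: "length (ws!i) = 6" "length (vs!i) = 6" using ws vs i li by (auto simp: wfl_def)
    show "ws!i = vs!i"
    proof (rule nth_equalityI)
      show "length (ws!i) = length (vs!i)" using l6 by simp
      fix j assume "j < length (ws!i)"
      hence j: "j < 6" using l6 by simp
      show "ws!i!j = vs!i!j" using mem_Mof[OF d i j] mem_Mof[OF d li j] eq by simp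
    qed
  qed
qed

lemma card_G:
  assumes d: "d \<in> {1,2,3}"
  shows "num_max_matchings (chain_cactus d n) = card {ws. wfl n ws \<and> G d ws}"
proof -
  have "{M. is_maximal_matching (chain_cactus d n) M} = Mof d ` {ws. wfl n ws \<and> G d ws}"
  proof
    show "{M. is_maximal_matching (chain_cactus d n) M} \<subseteq> Mof d ` {ws. wfl n ws \<and> G d ws}"
    proof
      fix M assume "M \<in> {M. is_maximal_matching (chain_cactus d n) M}"
      hence h: "is_maximal_matching (chain_cactus d n) M" by simp
      hence sub: "M \<subseteq> chain_cactus d n" by (simp add: is_maximal_matching_def is_matching_def)
      have e: "Mof d (wof d n M) = M" by (rule Mof_wof[OF d sub])
      have len: "length (wof d n M) = n" by (simp add: wof_def)
      have "G d (wof d n M)" using max_iff_G[OF d, of "wof d n M"] h e len by simp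
      thus "M \<in> Mof d ` {ws. wfl n ws \<and> G d ws}" using e wof_wfl by (metis (mono_tags, lifting) image_eqI mem_Collect_eq)
    qed
  next
    show "Mof d ` {ws. wfl n ws \<and> G d ws} \<subseteq> {M. is_maximal_matching (chain_cactus d n) M}"
      using max_iff_G[OF d] by (auto simp: wfl_def)
  qed
  moreover have "inj_on (Mof d) {ws. wfl n ws \<and> G d ws}"
    using inj_Mof[OF d] by (rule inj_on_subset) auto
  ultimately show ?thesis unfolding num_max_matchings_def by (simp add: card_image)
qed




definition hd0 :: "bool list \<Rightarrow> bool" where "hd0 w \<longleftrightarrow> w!5 \<or> w!0"
definition hdd :: "nat \<Rightarrow> bool list \<Rightarrow> bool" where "hdd d w \<longleftrightarrow> w!(d-1) \<or> w!d"
definition okw :: "nat \<Rightarrow> bool list \<Rightarrow> bool \<Rightarrow> bool \<Rightarrow> bool" where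
  "okw d w a b \<longleftrightarrow> (\<forall>j<6. \<not> (w!j \<and> w!((j+1) mod 6))) \<and>
     (\<forall>j<6. \<not> w!j \<longrightarrow> w!((j+5) mod 6) \<or> w!((j+1) mod 6) \<or> (b \<and> (j = d-1 \<or> j = d)) \<or> (a \<and> (j = 5 \<or> j = 0)))"

definition LF :: "nat \<Rightarrow> bool \<Rightarrow> bool list list \<Rightarrow> bool" where
  "LF d a ws \<longleftrightarrow> (\<forall>i<length ws. okw d (ws!i) (if i = 0 then a else hdd d (ws!(i-1))) (Suc i < length ws \<and> hd0 (ws!Suc i)))
     \<and> (\<forall>i. Suc i < length ws \<longrightarrow> \<not> (hdd d (ws!i) \<and> hd0 (ws!Suc i)))"

lemma m1: "(j::nat) < 6 \<Longrightarrow> (j+1) mod 6 < 6 \<and> (j+5) mod 6 < 6 \<and> (j+1) mod 6 \<noteq> j \<and> (j+5) mod 6 \<noteq> j \<and> ((j+5) mod 6 + 1) mod 6 = j"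
  by presburger
lemma m2: "(j'::nat) < 6 \<Longrightarrow> j = (j'+1) mod 6 \<Longrightarrow> j' = (j+5) mod 6"
  by presburger

lemma G_LF:
  assumes d: "d \<in> {1,2,3}"
  shows "G d ws \<longleftrightarrow> LF d False ws"
proof -
  have d6: "d - 1 < 6" "d < 6" using d by auto
  let ?n = "length ws"
  show ?thesis
  proof
    assume g: "G d ws"
    have g1: "\<And>i j i' j'. i < ?n \<Longrightarrow> j < 6 \<Longrightarrow> i' < ?n \<Longrightarrow> j' < 6 \<Longrightarrow> ws!i!j \<Longrightarrow> ws!i'!j' \<Longrightarrow> (i,j) \<noteq> (i',j') \<Longrightarrow> \<not> shr d i j i' j'"
      using g unfolding G_def by blast
    have g2: "\<And>i j. i < ?n \<Longrightarrow> j < 6 \<Longrightarrow> \<not> ws!i!j \<Longrightarrow> \<exists>i'<?n. \<exists>j'<6. ws!i'!j' \<and> shr d i j i' j'"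
      using g unfolding G_def by blast
    have intra: "\<not> (ws!i!j \<and> ws!i!((j+1) mod 6))" if "i < ?n" "j < 6" for i j
      using g1[of i j i "(j+1) mod 6"] that m1[of j] by (auto simp: shr_def)
    have cross: "\<not> (hdd d (ws!i) \<and> hd0 (ws!Suc i))" if "Suc i < ?n" for i
    proof
      assume h: "hdd d (ws!i) \<and> hd0 (ws!Suc i)"
      then obtain j where j: "j = d - 1 \<or> j = d" "ws!i!j" unfolding hdd_def by blast
      obtain j' where j': "j' = 5 \<or> j' = 0" "ws!Suc i!j'" using h unfolding hd0_def by blast
      have "\<not> shr d i j (Suc i) j'" using g1[of i j "Suc i" j'] that j j' d6 by auto
      thus False using j j' by (auto simp: shr_def)
    qed
    have maxi: "ws!i!((j+5) mod 6) \<or> ws!i!((j+1) mod 6) \<or> ((Suc i < ?n \<and> hd0 (ws!Suc i)) \<and> (j = d-1 \<or> j = d))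
         \<or> ((if i = 0 then False else hdd d (ws!(i-1))) \<and> (j = 5 \<or> j = 0))"
      if as: "i < ?n" "j < 6" "\<not> ws!i!j" for i j
    proof -
      obtain i' j' where h: "i' < ?n" "j' < 6" "ws!i'!j'" "shr d i j i' j'" using g2[of i j] as by blast
      from h(4) consider (a) "i = i'" "j' = j \<or> j' = (j+1) mod 6 \<or> j = (j'+1) mod 6"
        | (b) "i' = Suc i" "j = d - 1 \<or> j = d" "j' = 5 \<or> j' = 0"
        | (c) "i = Suc i'" "j' = d - 1 \<or> j' = d" "j = 5 \<or> j = 0"
        unfolding shr_def by blast
      thus ?thesis
      proof cases
        case a thus ?thesis using h as m2[OF h(2)] by auto
      next
        case b thus ?thesis using h unfolding hd0_def by auto
      next
        case c thus ?thesis using h unfolding hdd_def by auto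
      qed
    qed
    show "LF d False ws" unfolding LF_def okw_def using intra cross maxi by blast
  next
    assume l: "LF d False ws"
    have intra: "\<not> (ws!i!j \<and> ws!i!((j+1) mod 6))" if "i < ?n" "j < 6" for i j
      using l that unfolding LF_def okw_def by blast
    have cross: "\<not> (hdd d (ws!i) \<and> hd0 (ws!Suc i))" if "Suc i < ?n" for i
      using l that unfolding LF_def by blast
    have maxi: "ws!i!((j+5) mod 6) \<or> ws!i!((j+1) mod 6) \<or> ((Suc i < ?n \<and> hd0 (ws!Suc i)) \<and> (j = d-1 \<or> j = d))
         \<or> ((if i = 0 then False else hdd d (ws!(i-1))) \<and> (j = 5 \<or> j = 0))"
      if "i < ?n" "j < 6" "\<not> ws!i!j" for i j
      using l that unfolding LF_def okw_def by blast
    have G1: "\<not> shr d i j i' j'" if "i < ?n" "j < 6" "i' < ?n" "j' < 6" "ws!i!j" "ws!i'!j'" "(i,j) \<noteq> (i',j')" for i j i' j'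
    proof
      assume "shr d i j i' j'"
      then consider (a) "i = i'" "j' = j \<or> j' = (j+1) mod 6 \<or> j = (j'+1) mod 6"
        | (b) "i' = Suc i" "j = d - 1 \<or> j = d" "j' = 5 \<or> j' = 0"
        | (c) "i = Suc i'" "j' = d - 1 \<or> j' = d" "j = 5 \<or> j = 0"
        unfolding shr_def by blast
      thus False
      proof cases
        case a thus False using that intra[of i j] intra[of i' j'] by auto
      next
        case b thus False using that cross[of i] unfolding hdd_def hd0_def by auto
      next
        case c thus False using that cross[of i'] unfolding hdd_def hd0_def by auto
      qed
    qed
    have G2: "\<exists>i'<?n. \<exists>j'<6. ws!i'!j' \<and> shr d i j i' j'" if as: "i < ?n" "j < 6" "\<not> ws!i!j" for i j
    proof -
      from maxi[OF as] consider (a) "ws!i!((j+5) mod 6)" | (b) "ws!i!((j+1) mod 6)"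
        | (c) "Suc i < ?n" "hd0 (ws!Suc i)" "j = d-1 \<or> j = d"
        | (e) "i \<noteq> 0" "hdd d (ws!(i-1))" "j = 5 \<or> j = 0"
        by (auto split: if_splits)
      thus ?thesis
      proof cases
        case a
        have "shr d i j i ((j+5) mod 6)" using m1[of j] as by (simp add: shr_def)
        thus ?thesis using a as m1[of j] by blast
      next
        case b
        have "shr d i j i ((j+1) mod 6)" using m1[of j] as by (simp add: shr_def)
        thus ?thesis using b as m1[of j] by blast
      next
        case c
        then obtain j' where j': "j' = 5 \<or> j' = 0" "ws!Suc i!j'" unfolding hd0_def by blast
        have "shr d i j (Suc i) j'" using c j' unfolding shr_def by auto
        moreover have "j' < 6" using j' by auto
        ultimately show ?thesis using c j' by blast
      next
        case e
        then obtain j' where j': "j' = d - 1 \<or> j' = d" "ws!(i-1)!j'" unfolding hdd_def by blast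
        have "i - 1 < ?n" "j' < 6" using as j' d6 by auto
        moreover have "shr d i j (i-1) j'" using e j' unfolding shr_def by auto
        ultimately show ?thesis using j' by blast
      qed
    qed
    show "G d ws" unfolding G_def using G1 G2 by blast
  qed
qed

fun vl :: "nat \<Rightarrow> bool \<Rightarrow> bool list list \<Rightarrow> bool" where
  "vl d a [] = True"
| "vl d a [w] = okw d w a False"
| "vl d a (w # v # r) = (\<not> (hdd d w \<and> hd0 v) \<and> okw d w a (hd0 v) \<and> vl d (hdd d w) (v # r))"

lemma all_less_Suc_split: "(\<forall>i<Suc n. P i) \<longleftrightarrow> P 0 \<and> (\<forall>i<n. P (Suc i))"
  by (auto simp: less_Suc_eq_0_disj)
lemma all_nat_split: "(\<forall>i::nat. P i) \<longleftrightarrow> P 0 \<and> (\<forall>i. P (Suc i))"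
  by (metis not0_implies_Suc)

lemma LF_vl: "LF d a ws \<longleftrightarrow> vl d a ws"
proof (induction d a ws rule: vl.induct)
  case (1 d a) thus ?case by (simp add: LF_def)
next
  case (2 d a w) thus ?case by (simp add: LF_def)
next
  case (3 d a w v r)
  let ?P = "\<lambda>a ws i. okw d (ws!i) (if i = 0 then a else hdd d (ws!(i-1))) (Suc i < length ws \<and> hd0 (ws!Suc i))"
  let ?Q = "\<lambda>ws i. Suc i < length ws \<longrightarrow> \<not> (hdd d (ws!i) \<and> hd0 (ws!Suc i))"
  have eP: "?P a (w#v#r) (Suc k) = ?P (hdd d w) (v#r) k" for k by (cases k) simp_all
  have eQ: "?Q (w#v#r) (Suc k) = ?Q (v#r) k" for k by simp
  have "LF d a (w#v#r) \<longleftrightarrow> (\<forall>i<Suc (length (v#r)). ?P a (w#v#r) i) \<and> (\<forall>i. ?Q (w#v#r) i)"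
    unfolding LF_def by simp
  also have "\<dots> \<longleftrightarrow> (?P a (w#v#r) 0 \<and> (\<forall>i<length (v#r). ?P (hdd d w) (v#r) i)) \<and> (?Q (w#v#r) 0 \<and> (\<forall>i. ?Q (v#r) i))"
    by (simp only: all_less_Suc_split[where P="?P a (w#v#r)"] all_nat_split[where P="?Q (w#v#r)"] eP eQ)
  also have "\<dots> \<longleftrightarrow> okw d w a (hd0 v) \<and> \<not> (hdd d w \<and> hd0 v) \<and> LF d (hdd d w) (v#r)"
    unfolding LF_def by auto
  finally show ?case using 3 by auto
qed

lemma card_vl:
  assumes d: "d \<in> {1,2,3}"
  shows "num_max_matchings (chain_cactus d n) = card {ws. wfl n ws \<and> vl d False ws}"
  using card_G[OF d, of n] G_LF[OF d] LF_vl by simp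




definition Ls :: "nat \<Rightarrow> bool \<Rightarrow> bool \<Rightarrow> nat \<Rightarrow> bool list list set" where
  "Ls d a b m = {ws. wfl (Suc m) ws \<and> vl d a ws \<and> hd0 (hd ws) = b}"

definition W6 :: "bool list set" where "W6 = {w. length w = 6}"

fun T :: "nat \<Rightarrow> bool \<Rightarrow> bool \<Rightarrow> nat \<Rightarrow> nat" where
  "T d a b 0 = card {w\<in>W6. hd0 w = b \<and> okw d w a False}"
| "T d a b (Suc m) = (\<Sum>v\<in>W6. (if hd0 v = b \<and> okw d v a False then T d (hdd d v) False m else 0)
      + (if hd0 v = b \<and> \<not> hdd d v \<and> okw d v a True then T d (hdd d v) True m else 0))"

lemma fin_W6: "finite W6"
proof -
  have "W6 = {xs. set xs \<subseteq> (UNIV::bool set) \<and> length xs = 6}" by (auto simp: W6_def)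
  moreover have "finite {xs. set xs \<subseteq> (UNIV::bool set) \<and> length xs = 6}"
    by (rule finite_lists_length_eq) simp
  ultimately show ?thesis by simp
qed

lemma fin_Ls: "finite (Ls d a b m)"
proof -
  have "Ls d a b m \<subseteq> {xs. set xs \<subseteq> W6 \<and> length xs = Suc m}"
    by (auto simp: Ls_def wfl_def W6_def)
  thus ?thesis using finite_lists_length_eq[OF fin_W6] by (rule finite_subset)
qed

lemma Ls0: "Ls d a b 0 = (\<lambda>w. [w]) ` {w\<in>W6. hd0 w = b \<and> okw d w a False}"
proof
  show "Ls d a b 0 \<subseteq> (\<lambda>w. [w]) ` {w\<in>W6. hd0 w = b \<and> okw d w a False}"
  proof
    fix ws assume "ws \<in> Ls d a b 0"
    hence h: "length ws = 1" "\<forall>w\<in>set ws. length w = 6" "vl d a ws" "hd0 (hd ws) = b"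
      by (auto simp: Ls_def wfl_def)
    then obtain w where "ws = [w]" by (metis One_nat_def length_0_conv length_Suc_conv)
    thus "ws \<in> (\<lambda>w. [w]) ` {w\<in>W6. hd0 w = b \<and> okw d w a False}" using h by (auto simp: W6_def)
  qed
next
  show "(\<lambda>w. [w]) ` {w\<in>W6. hd0 w = b \<and> okw d w a False} \<subseteq> Ls d a b 0"
    by (auto simp: Ls_def wfl_def W6_def)
qed

lemma T0: "card (Ls d a b 0) = T d a b 0"
  unfolding Ls0 by (simp add: card_image inj_on_def)

lemma LsS: "Ls d a b (Suc m) = (\<Union>v\<in>W6.
    (if hd0 v = b \<and> okw d v a False then (Cons v) ` Ls d (hdd d v) False m else {})
  \<union> (if hd0 v = b \<and> \<not> hdd d v \<and> okw d v a True then (Cons v) ` Ls d (hdd d v) True m else {}))"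
  (is "?L = ?R")
proof
  show "?L \<subseteq> ?R"
  proof
    fix ws assume "ws \<in> ?L"
    hence h: "length ws = Suc (Suc m)" "\<forall>w\<in>set ws. length w = 6" "vl d a ws" "hd0 (hd ws) = b"
      by (auto simp: Ls_def wfl_def)
    then obtain v u r where ws: "ws = v # u # r" by (metis length_Suc_conv)
    have vl: "\<not> (hdd d v \<and> hd0 u)" "okw d v a (hd0 u)" "vl d (hdd d v) (u # r)" using h(3) ws by auto
    have v6: "v \<in> W6" using h(2) ws by (auto simp: W6_def)
    have ur: "u # r \<in> Ls d (hdd d v) (hd0 u) m" using h ws vl by (auto simp: Ls_def wfl_def)
    show "ws \<in> ?R"
    proof (cases "hd0 u")
      case True
      thus ?thesis using v6 ur vl h(4) ws by (intro UN_I[OF v6]) auto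
    next
      case False
      thus ?thesis using v6 ur vl h(4) ws by (intro UN_I[OF v6]) auto
    qed
  qed
next
  show "?R \<subseteq> ?L"
  proof
    fix ws assume "ws \<in> ?R"
    then obtain v where v: "v \<in> W6" and
      ws: "ws \<in> (if hd0 v = b \<and> okw d v a False then (Cons v) ` Ls d (hdd d v) False m else {})
         \<union> (if hd0 v = b \<and> \<not> hdd d v \<and> okw d v a True then (Cons v) ` Ls d (hdd d v) True m else {})"
      by blast
    then obtain r c where r: "ws = v # r" "r \<in> Ls d (hdd d v) c m" "hd0 v = b" "okw d v a c" "\<not> (hdd d v \<and> c)"
      by (auto split: if_splits)
    then obtain u r' where ur: "r = u # r'" by (auto simp: Ls_def wfl_def length_Suc_conv)
    have "vl d (hdd d v) (u # r')" "hd0 u = c" "length r = Suc m" "\<forall>w\<in>set r. length w = 6"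
      using r ur by (auto simp: Ls_def wfl_def)
    thus "ws \<in> ?L" using r ur v by (auto simp: Ls_def wfl_def W6_def)
  qed
qed

lemma TS: "card (Ls d a b m) = T d a b m"
proof (induction m arbitrary: a b)
  case 0 thus ?case by (rule T0)
next
  case (Suc m)
  let ?A = "\<lambda>v. (if hd0 v = b \<and> okw d v a False then (Cons v) ` Ls d (hdd d v) False m else {})"
  let ?B = "\<lambda>v. (if hd0 v = b \<and> \<not> hdd d v \<and> okw d v a True then (Cons v) ` Ls d (hdd d v) True m else {})"
  have finAB: "finite (?A v)" "finite (?B v)" for v using fin_Ls by auto
  have cardA: "card (?A v) = (if hd0 v = b \<and> okw d v a False then T d (hdd d v) False m else 0)" for v
    using Suc.IH by (simp add: card_image)
  have cardB: "card (?B v) = (if hd0 v = b \<and> \<not> hdd d v \<and> okw d v a True then T d (hdd d v) True m else 0)" for v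
    using Suc.IH by (simp add: card_image)
  have disjAB: "?A v \<inter> ?B v = {}" for v
    by (auto simp: Ls_def)
  have cardAB: "card (?A v \<union> ?B v) = card (?A v) + card (?B v)" for v
    using finAB disjAB by (simp add: card_Un_disjoint)
  have "card (Ls d a b (Suc m)) = card (\<Union>v\<in>W6. ?A v \<union> ?B v)"
    by (simp only: LsS)
  also have "\<dots> = (\<Sum>v\<in>W6. card (?A v \<union> ?B v))"
  proof (rule card_UN_disjoint)
    show "finite W6" by (rule fin_W6)
    show "\<forall>v\<in>W6. finite (?A v \<union> ?B v)" using finAB by blast
    show "\<forall>v\<in>W6. \<forall>v'\<in>W6. v \<noteq> v' \<longrightarrow> (?A v \<union> ?B v) \<inter> (?A v' \<union> ?B v') = {}"
      by (auto split: if_splits)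
  qed
  also have "\<dots> = T d a b (Suc m)"
    by (simp only: cardAB cardA cardB T.simps)
  finally show ?case .
qed

lemma card_T:
  assumes d: "d \<in> {1,2,3}"
  shows "num_max_matchings (chain_cactus d (Suc m)) = T d False False m + T d False True m"
proof -
  have "{ws. wfl (Suc m) ws \<and> vl d False ws} = Ls d False False m \<union> Ls d False True m"
    by (auto simp: Ls_def)
  moreover have "Ls d False False m \<inter> Ls d False True m = {}" by (auto simp: Ls_def)
  ultimately have "card {ws. wfl (Suc m) ws \<and> vl d False ws} = card (Ls d False False m) + card (Ls d False True m)"
    using fin_Ls by (simp add: card_Un_disjoint)
  thus ?thesis using card_vl[OF d] TS by simp
qed




definition NL :: "bool list list" where "NL = List.n_lists 6 [True, False]"

lemma W6_NL: "W6 = set NL"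
  unfolding W6_def NL_def set_n_lists by auto

lemma dist_NL: "distinct NL"
  unfolding NL_def by (rule distinct_n_lists) simp

lemma card_W6: "card {w\<in>W6. P w} = length (filter P NL)"
proof -
  have "{w\<in>W6. P w} = set (filter P NL)" by (auto simp: W6_NL)
  moreover have "card (set (filter P NL)) = length (filter P NL)"
    by (rule distinct_card) (simp add: dist_NL)
  ultimately show ?thesis by simp
qed

definition okw2 :: "nat \<Rightarrow> bool list \<Rightarrow> bool \<Rightarrow> bool \<Rightarrow> bool" where
  "okw2 d w a b \<longleftrightarrow> list_all (\<lambda>j. \<not> (w!j \<and> w!((j+1) mod 6))) [0..<6] \<and>
     list_all (\<lambda>j. \<not> w!j \<longrightarrow> w!((j+5) mod 6) \<or> w!((j+1) mod 6) \<or> (b \<and> (j = d-1 \<or> j = d)) \<or> (a \<and> (j = 5 \<or> j = 0))) [0..<6]"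

lemma okw2: "okw = okw2"
  by (intro ext) (simp add: okw_def okw2_def list_all_iff atLeast0LessThan Ball_def)

definition cf :: "nat \<Rightarrow> bool \<Rightarrow> bool \<Rightarrow> bool \<Rightarrow> bool \<Rightarrow> nat" where
  "cf d a b a2 b2 = length (filter (\<lambda>v. hd0 v = b \<and> hdd d v = a2 \<and>
      (if b2 then \<not> hdd d v \<and> okw2 d v a True else okw2 d v a False)) NL)"

definition c0 :: "nat \<Rightarrow> bool \<Rightarrow> bool \<Rightarrow> nat" where
  "c0 d a b = length (filter (\<lambda>w. hd0 w = b \<and> okw2 d w a False) NL)"

lemma T_0: "T d a b 0 = c0 d a b"
  by (simp add: card_W6 c0_def okw2)

lemma sum_if_const: "(\<Sum>v\<in>W6. if Q v then c else 0) = card {v\<in>W6. Q v} * (c::nat)"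
  using sum.inter_filter[OF fin_W6, of "\<lambda>_. c" Q] by simp

lemma T_Suc: "T d a b (Suc m) = cf d a b False False * T d False False m + cf d a b True False * T d True False m
   + cf d a b False True * T d False True m + cf d a b True True * T d True True m"
proof -
  let ?P0 = "\<lambda>v. hd0 v = b \<and> okw d v a False"
  let ?P1 = "\<lambda>v. hd0 v = b \<and> \<not> hdd d v \<and> okw d v a True"
  have e: "(if ?P0 v then T d (hdd d v) False m else 0) + (if ?P1 v then T d (hdd d v) True m else 0)
     = (if ?P0 v \<and> hdd d v = False then T d False False m else 0) + (if ?P0 v \<and> hdd d v = True then T d True False m else 0)
     + (if ?P1 v \<and> hdd d v = False then T d False True m else 0) + (if ?P1 v \<and> hdd d v = True then T d True True m else 0)" for v
    by (cases "hdd d v") auto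
  have "T d a b (Suc m) = (\<Sum>v\<in>W6. (if ?P0 v \<and> hdd d v = False then T d False False m else 0) + (if ?P0 v \<and> hdd d v = True then T d True False m else 0)
     + (if ?P1 v \<and> hdd d v = False then T d False True m else 0) + (if ?P1 v \<and> hdd d v = True then T d True True m else 0))"
    by (simp only: T.simps e)
  also have "\<dots> = card {v\<in>W6. ?P0 v \<and> hdd d v = False} * T d False False m + card {v\<in>W6. ?P0 v \<and> hdd d v = True} * T d True False m
     + card {v\<in>W6. ?P1 v \<and> hdd d v = False} * T d False True m + card {v\<in>W6. ?P1 v \<and> hdd d v = True} * T d True True m"
    by (simp only: sum.distrib sum_if_const)
  also have "\<dots> = cf d a b False False * T d False False m + cf d a b True False * T d True False m
   + cf d a b False True * T d False True m + cf d a b True True * T d True True m"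
    unfolding cf_def card_W6 okw2[symmetric] by (simp add: conj_commute conj_left_commute)
  finally show ?thesis .
qed

declare T.simps[simp del]

lemma cf_1_0: "cf 1 False False False False = 0 \<and> cf 1 False False False True = 1 \<and> cf 1 False False True False = 1 \<and> cf 1 False False True True = 0" by code_simp
lemma c0_1_0: "c0 1 False False = 1" by code_simp
lemma cf_1_1: "cf 1 False True False False = 1 \<and> cf 1 False True False True = 2 \<and> cf 1 False True True False = 3 \<and> cf 1 False True True True = 0" by code_simp
lemma c0_1_1: "c0 1 False True = 4" by code_simp
lemma cf_1_2: "cf 1 True False False False = 1 \<and> cf 1 True False False True = 2 \<and> cf 1 True False True False = 2 \<and> cf 1 True False True True = 0" by code_simp
lemma c0_1_2: "c0 1 True False = 3" by code_simp
lemma cf_1_3: "cf 1 True True False False = 1 \<and> cf 1 True True False True = 2 \<and> cf 1 True True True False = 3 \<and> cf 1 True True True True = 0" by code_simp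
lemma c0_1_3: "c0 1 True True = 4" by code_simp
lemma cf_2_0: "cf 2 False False False False = 0 \<and> cf 2 False False False True = 0 \<and> cf 2 False False True False = 1 \<and> cf 2 False False True True = 0" by code_simp
lemma c0_2_0: "c0 2 False False = 1" by code_simp
lemma cf_2_1: "cf 2 False True False False = 1 \<and> cf 2 False True False True = 3 \<and> cf 2 False True True False = 3 \<and> cf 2 False True True True = 0" by code_simp
lemma c0_2_1: "c0 2 False True = 4" by code_simp
lemma cf_2_2: "cf 2 True False False False = 0 \<and> cf 2 True False False True = 2 \<and> cf 2 True False True False = 3 \<and> cf 2 True False True True = 0" by code_simp
lemma c0_2_2: "c0 2 True False = 3" by code_simp
lemma cf_2_3: "cf 2 True True False False = 1 \<and> cf 2 True True False True = 3 \<and> cf 2 True True True False = 3 \<and> cf 2 True True True True = 0" by code_simp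
lemma c0_2_3: "c0 2 True True = 4" by code_simp
lemma cf_3_0: "cf 3 False False False False = 1 \<and> cf 3 False False False True = 1 \<and> cf 3 False False True False = 0 \<and> cf 3 False False True True = 0" by code_simp
lemma c0_3_0: "c0 3 False False = 1" by code_simp
lemma cf_3_1: "cf 3 False True False False = 0 \<and> cf 3 False True False True = 2 \<and> cf 3 False True True False = 4 \<and> cf 3 False True True True = 0" by code_simp
lemma c0_3_1: "c0 3 False True = 4" by code_simp
lemma cf_3_2: "cf 3 True False False False = 1 \<and> cf 3 True False False True = 1 \<and> cf 3 True False True False = 2 \<and> cf 3 True False True True = 0" by code_simp
lemma c0_3_2: "c0 3 True False = 3" by code_simp
lemma cf_3_3: "cf 3 True True False False = 0 \<and> cf 3 True True False True = 2 \<and> cf 3 True True True False = 4 \<and> cf 3 True True True True = 0" by code_simp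
lemma c0_3_3: "c0 3 True True = 4" by code_simp

lemmas cfv = cf_1_0 c0_1_0 cf_1_1 c0_1_1 cf_1_2 c0_1_2 cf_1_3 c0_1_3 cf_2_0 c0_2_0 cf_2_1 c0_2_1 cf_2_2 c0_2_2 cf_2_3 c0_2_3 cf_3_0 c0_3_0 cf_3_1 c0_3_1 cf_3_2 c0_3_2 cf_3_3 c0_3_3

lemma tot_eq: "d \<in> {1,2,3} \<Longrightarrow> int (num_max_matchings (chain_cactus d (Suc m))) = int (T d False False m) + int (T d False True m)"
  by (simp add: card_T)

theorem corollary3p5:
  shows "(pseq 0 = 1 \<and> pseq 1 = 5 \<and> pseq 2 = 25 \<and>
          (\<forall>n\<ge>3. pseq n = 5 * pseq (n - 1) - 4 * pseq (n - 2) + 4 * pseq (n - 3)))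
       \<and> (mseq 0 = 1 \<and> mseq 1 = 5 \<and> mseq 2 = 25 \<and>
          (\<forall>n\<ge>3. mseq n = 6 * mseq (n - 1) - 3 * mseq (n - 2) + 2 * mseq (n - 3)))
       \<and> (oseq 0 = 1 \<and> oseq 1 = 5 \<and> oseq 2 = 25 \<and>
          (\<forall>n\<ge>3. oseq n = 4 * oseq (n - 1) + 4 * oseq (n - 2) + oseq (n - 3)))"
proof -
  have P: "pseq (Suc m) = int (T 3 False False m) + int (T 3 False True m)" for m
    using tot_eq[of 3 m] by (simp add: pseq_def)
  have Mq: "mseq (Suc m) = int (T 2 False False m) + int (T 2 False True m)" for m
    using tot_eq[of 2 m] by (simp add: mseq_def)
  have O: "oseq (Suc m) = int (T 1 False False m) + int (T 1 False True m)" for m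
    using tot_eq[of 1 m] by (simp add: oseq_def)
  have rec: "(\<forall>n\<ge>3. f n = A * f (n - 1) + B * f (n - 2) + C * f (n - 3))"
    if "f 3 = A * f 2 + B * f 1 + C * f 0" "\<And>m. f (Suc (Suc (Suc (Suc m)))) = A * f (Suc (Suc (Suc m))) + B * f (Suc (Suc m)) + C * f (Suc m)"
    for f :: "nat \<Rightarrow> int" and A B C
  proof (intro allI impI)
    fix n :: nat assume n3: "3 \<le> n"
    show "f n = A * f (n - 1) + B * f (n - 2) + C * f (n - 3)"
    proof (cases "n = 3")
      case True thus ?thesis using that(1) by simp
    next
      case False
      define m where "m = n - 4"
      have nm: "n = Suc (Suc (Suc (Suc m)))" using n3 False unfolding m_def by arith
      show ?thesis using that(2)[of m] unfolding nm by simp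
    qed
  qed
  have p: "pseq 0 = 1 \<and> pseq (Suc 0) = 5 \<and> pseq (Suc (Suc 0)) = 25 \<and> pseq (Suc (Suc (Suc 0))) = 109"
    unfolding P by (simp add: T_Suc T_0 cfv pseq_def)
  have ps: "pseq (Suc (Suc (Suc (Suc m)))) = 5 * pseq (Suc (Suc (Suc m))) + (-4) * pseq (Suc (Suc m)) + 4 * pseq (Suc m)" for m
    by (simp add: P T_Suc cfv algebra_simps)
  have m: "mseq 0 = 1 \<and> mseq (Suc 0) = 5 \<and> mseq (Suc (Suc 0)) = 25 \<and> mseq (Suc (Suc (Suc 0))) = 137"
    unfolding Mq by (simp add: T_Suc T_0 cfv mseq_def)
  have ms: "mseq (Suc (Suc (Suc (Suc m)))) = 6 * mseq (Suc (Suc (Suc m))) + (-3) * mseq (Suc (Suc m)) + 2 * mseq (Suc m)" for m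
    by (simp add: Mq T_Suc cfv algebra_simps)
  have o: "oseq 0 = 1 \<and> oseq (Suc 0) = 5 \<and> oseq (Suc (Suc 0)) = 25 \<and> oseq (Suc (Suc (Suc 0))) = 121"
    unfolding O by (simp add: T_Suc T_0 cfv cfv[unfolded One_nat_def] oseq_def)
  have os: "oseq (Suc (Suc (Suc (Suc m)))) = 4 * oseq (Suc (Suc (Suc m))) + 4 * oseq (Suc (Suc m)) + 1 * oseq (Suc m)" for m
    by (simp add: O T_Suc cfv cfv[unfolded One_nat_def] algebra_simps)
  have rp: "\<forall>n\<ge>3. pseq n = 5 * pseq (n - 1) + (-4) * pseq (n - 2) + 4 * pseq (n - 3)"
    by (rule rec) (use p ps in \<open>auto simp: numeral_3_eq_3 numeral_2_eq_2\<close>)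
  have rm: "\<forall>n\<ge>3. mseq n = 6 * mseq (n - 1) + (-3) * mseq (n - 2) + 2 * mseq (n - 3)"
    by (rule rec) (use m ms in \<open>auto simp: numeral_3_eq_3 numeral_2_eq_2\<close>)
  have ro: "\<forall>n\<ge>3. oseq n = 4 * oseq (n - 1) + 4 * oseq (n - 2) + 1 * oseq (n - 3)"
    by (rule rec) (use o os in \<open>auto simp: numeral_3_eq_3 numeral_2_eq_2\<close>)
  show ?thesis using p m o rp rm ro by (simp add: numeral_2_eq_2)
qed


end
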